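(* For all $i,j\in\mathbb{Z}$ with $i\neq j$, the linear orders $L_i$ and $L_j$ are not isomorphic. Moreover, each $L_i$ is scattered (contains no dense suborder).
   Context: Ordinal exponents have their usual ordinal meaning: $\omega^n$ is the ordinal $\omega^n$ for $n\in\omega$, and $\omega^\omega=\sup_{n<\omega}\omega^n$. For a positive integer $k$ and an order $Z$, $kZ$ denotes $k$ consecutive copies of $Z$. Given orders $M_k$ ($k\ge 1$), the sum $\cdots+M_3+M_2+M_1$ denotes the $\omega^*$-indexed ordered sum, in which $M_{k+1}$ lies entirely to the left of $M_k$. For $n\ge 0$ define \[ L_n=\cdots+3\omega^{n+3}+2\omega^{n+2}+\omega^{n+1}+\omega^\omega, \] i.e. the $\omega^*$-sum whose $k$-th summand from the right ($k\ge1$) is $k\,\omega^{n+k}$, followed on the far right by $\omega^\omega$. For $n\ge1$ define \[ L_{-n}=\cdots+(n+3)\omega^{3}+(n+2)\omega^{2}+(n+1)\omega+\omega^\omega, \] i.e. the $\omega^*$-sum whose $k$-th summand from the right ($k\ge1$) is $(n+k)\,\omega^{k}$, followed on the far right by $\omega^\omega$. An order is dense if it is infinite and between any two points there is a third; an order is scattered if it contains no dense suborder. *)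

theory Defs
  imports Main
begin

text \<open>Lexicographic strict order on lists (used on lists of equal length m,
  which represent the ordinal omega^m in Cantor normal form, most significant digit first).\<close>
definition lexless :: "nat list \<Rightarrow> nat list \<Rightarrow> bool" where
  "lexless xs ys \<longleftrightarrow>
     (\<exists>j. j < length xs \<and> j < length ys \<and> take j xs = take j ys \<and> xs ! j < ys ! j)"

type_synonym Lpt = "(nat \<times> nat \<times> nat list) + (nat \<times> nat list)"

text \<open>Inl (k, c, xs): a point of the c-th copy (c < mult k)
  of omega^(ex k) in the k-th summand from the right (k \<ge> 1), where
  mult k = nat(-i) + k and ex k = nat i + k; so for i = n \<ge> 0 the summand is k omega^(n+k),
  and for i = -n < 0 it is (n+k) omega^k.  Inr (m, xs) with length xs = m: a point of
  omega^omega = omega^0 + omega^1 + omega^2 + ... .\<close>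
definition Lcarrier :: "int \<Rightarrow> Lpt set" where
  "Lcarrier i =
     {Inl (k, c, xs) | k c xs. 1 \<le> k \<and> c < nat (- i) + k \<and> length xs = nat i + k}
     \<union> {Inr (m, xs) | m xs. length xs = m}"

text \<open>Strict order: omega^*-indexed sum (summand k+1 left of summand k), followed by omega^omega.\<close>
fun Lless :: "Lpt \<Rightarrow> Lpt \<Rightarrow> bool" where
  "Lless (Inl (k, c, xs)) (Inl (k', c', xs')) \<longleftrightarrow>
     k' < k \<or> (k = k' \<and> (c < c' \<or> (c = c' \<and> lexless xs xs')))"
| "Lless (Inl _) (Inr _) \<longleftrightarrow> True"
| "Lless (Inr _) (Inl _) \<longleftrightarrow> False"
| "Lless (Inr (m, xs)) (Inr (m', xs')) \<longleftrightarrow> m < m' \<or> (m = m' \<and> lexless xs xs')"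

definition order_iso :: "'a set \<Rightarrow> ('a \<Rightarrow> 'a \<Rightarrow> bool) \<Rightarrow> 'b set \<Rightarrow> ('b \<Rightarrow> 'b \<Rightarrow> bool) \<Rightarrow> bool" where
  "order_iso A r B s \<longleftrightarrow>
     (\<exists>f. bij_betw f A B \<and> (\<forall>x\<in>A. \<forall>y\<in>A. r x y \<longleftrightarrow> s (f x) (f y)))"

definition dense_suborder :: "'a set \<Rightarrow> ('a \<Rightarrow> 'a \<Rightarrow> bool) \<Rightarrow> bool" where
  "dense_suborder S r \<longleftrightarrow> infinite S \<and> (\<forall>x\<in>S. \<forall>y\<in>S. r x y \<longrightarrow> (\<exists>z\<in>S. r x z \<and> r z y))"

definition scattered :: "'a set \<Rightarrow> ('a \<Rightarrow> 'a \<Rightarrow> bool) \<Rightarrow> bool" where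
  "scattered A r \<longleftrightarrow> \<not> (\<exists>S\<subseteq>A. dense_suborder S r)"

end

theory Submission
  imports Defs
begin

lemma lexless_Nil1 [simp]: "\<not> lexless [] ys" by (simp add: lexless_def)
lemma lexless_Nil2 [simp]: "\<not> lexless xs []" by (simp add: lexless_def)
lemma lexless_Cons [simp]:
  "lexless (x#xs) (y#ys) \<longleftrightarrow> x < y \<or> (x = y \<and> lexless xs ys)"
proof
  assume "lexless (x#xs) (y#ys)"
  then obtain j where j: "j < length (x#xs)" "j < length (y#ys)" "take j (x#xs) = take j (y#ys)"
     "(x#xs)!j < (y#ys)!j" unfolding lexless_def by blast
  show "x < y \<or> (x = y \<and> lexless xs ys)"
  proof (cases j)
    case 0 then show ?thesis using j by simp
  next
    case (Suc j') then show ?thesis using j unfolding lexless_def by auto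
  qed
next
  assume "x < y \<or> (x = y \<and> lexless xs ys)"
  then show "lexless (x#xs) (y#ys)"
  proof
    assume "x < y" then show ?thesis unfolding lexless_def by (intro exI[of _ 0]) auto
  next
    assume "x = y \<and> lexless xs ys"
    then obtain j where j: "j < length xs" "j < length ys" "take j xs = take j ys" "xs!j < ys!j"
      unfolding lexless_def by blast
    then show ?thesis using \<open>x = y \<and> lexless xs ys\<close> unfolding lexless_def
      by (intro exI[of _ "Suc j"]) auto
  qed
qed

lemma lexless_irrefl: "\<not> lexless xs xs"
  by (induction xs) auto

lemma lexless_total: "length xs = length ys \<Longrightarrow> xs \<noteq> ys \<Longrightarrow> lexless xs ys \<or> lexless ys xs"
proof (induction xs arbitrary: ys)
  case Nil then show ?case by simp
next
  case (Cons x xs) then show ?case by (cases ys) auto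
qed

lemma lexless_lex: "lexless xs ys \<Longrightarrow> length xs = length ys \<Longrightarrow> (xs, ys) \<in> lex less_than"
proof (induction xs arbitrary: ys)
  case Nil then show ?case by simp
next
  case (Cons x xs) then show ?case by (cases ys) auto
qed

lemma lexless_nz: "lexless xs ys \<Longrightarrow> \<exists>y\<in>set ys. y \<noteq> 0"
proof (induction xs arbitrary: ys)
  case Nil then show ?case by simp
next
  case (Cons x xs) then show ?case by (cases ys) auto
qed

lemma lexless_app: "a < b \<Longrightarrow> lexless (pre @ a # U) (pre @ b # W)"
  by (induction pre) auto

lemma lexless_sandwich:
  "lexless (pre @ a # replicate t 0) ys \<Longrightarrow> lexless ys (pre @ Suc a # replicate t 0)
   \<Longrightarrow> \<exists>Y. ys = pre @ a # Y \<and> lexless (replicate t 0) Y"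
proof (induction pre arbitrary: ys)
  case Nil
  then obtain y Y where ys: "ys = y # Y" by (cases ys) auto
  have "\<not> lexless Y (replicate t 0)" using lexless_nz by fastforce
  then show ?case using Nil ys by auto
next
  case (Cons p P)
  then obtain y Y where ys: "ys = y # Y" by (cases ys) auto
  then show ?case using Cons by auto
qed

lemma lexless_approx:
  "lexless zs (pre @ Suc a # U) \<Longrightarrow> \<forall>x\<in>set U. x = 0 \<Longrightarrow> length zs = Suc (length pre + length U)
   \<Longrightarrow> U \<noteq> [] \<Longrightarrow> \<exists>N. \<forall>n\<ge>N. lexless zs (pre @ a # n # W)"
proof (induction pre arbitrary: zs)
  case Nil
  then obtain b R where zs: "zs = b # R" by (cases zs) auto
  have "\<not> lexless R U" using lexless_nz Nil(2) by fastforce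
  then have "b \<le> a" using Nil zs by auto
  show ?case
  proof (cases "b < a")
    case True then show ?thesis using zs by auto
  next
    case False
    then have "b = a" using \<open>b \<le> a\<close> by simp
    obtain r R' where R: "R = r # R'" using Nil zs by (cases R) auto
    show ?thesis using zs R \<open>b = a\<close> by (intro exI[of _ "Suc r"]) auto
  qed
next
  case (Cons p P)
  then obtain b R where zs: "zs = b # R" by (cases zs) auto
  show ?case
  proof (cases "b < p")
    case True then show ?thesis using zs by auto
  next
    case False
    then have "b = p" "lexless R (P @ Suc a # U)" using Cons.prems zs by auto
    then obtain N where "\<forall>n\<ge>N. lexless R (P @ a # n # W)" using Cons zs by fastforce
    then show ?thesis using zs \<open>b = p\<close> by auto
  qed
qed

definition tz :: "nat list \<Rightarrow> nat" where
  "tz xs = length (takeWhile (\<lambda>x. x = 0) (rev xs))"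

lemma tz_app: "v \<noteq> 0 \<Longrightarrow> tz (pre @ v # replicate t 0) = t"
  by (simp add: tz_def takeWhile_append)

lemma tz_app2: "\<exists>y\<in>set Y. y \<noteq> 0 \<Longrightarrow> tz (pre @ a # Y) = tz Y"
  by (auto simp add: tz_def)

lemma tw_less: "\<exists>x\<in>set xs. \<not> P x \<Longrightarrow> length (takeWhile P xs) < length xs"
  by (induction xs) auto

lemma tz_less: "\<exists>y\<in>set Y. y \<noteq> 0 \<Longrightarrow> tz Y < length Y"
  unfolding tz_def using tw_less[of "rev Y" "\<lambda>x. x = 0"] by simp

lemma decomp: "\<exists>y\<in>set xs. y \<noteq> (0::nat) \<Longrightarrow> \<exists>pre v t. xs = pre @ v # replicate t 0 \<and> v \<noteq> 0"
proof (induction xs rule: rev_induct)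
  case Nil then show ?case by simp
next
  case (snoc x xs)
  show ?case
  proof (cases "x = 0")
    case False then show ?thesis by (intro exI[of _ xs] exI[of _ x] exI[of _ 0]) auto
  next
    case True
    then obtain pre v t where "xs = pre @ v # replicate t 0" "v \<noteq> 0" using snoc by auto
    then show ?thesis using True
      by (intro exI[of _ pre] exI[of _ v] exI[of _ "Suc t"]) (simp add: replicate_append_same[symmetric])
  qed
qed


fun hdg :: "'a set \<Rightarrow> ('a \<Rightarrow> 'a \<Rightarrow> bool) \<Rightarrow> nat \<Rightarrow> 'a \<Rightarrow> bool" where
  "hdg A r 0 x = True"
| "hdg A r (Suc d) x = (\<forall>z\<in>A. r z x \<longrightarrow> infinite {w\<in>A. r z w \<and> r w x \<and> hdg A r d w})"

declare hdg.simps(2)[simp del]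

lemma hd_iso:
  assumes bij: "bij_betw f A B" and ord: "\<forall>x\<in>A. \<forall>y\<in>A. r x y \<longleftrightarrow> s (f x) (f y)"
  shows "x \<in> A \<Longrightarrow> hdg A r d x \<longleftrightarrow> hdg B s d (f x)"
proof (induction d arbitrary: x)
  case 0 then show ?case by simp
next
  case (Suc d)
  have inj: "inj_on f A" and img: "f ` A = B" using bij by (auto simp: bij_betw_def)
  have eq: "{w\<in>B. s (f z) w \<and> s w (f x) \<and> hdg B s d w} = f ` {w\<in>A. r z w \<and> r w x \<and> hdg A r d w}"
    if "z \<in> A" for z
  proof
    show "{w\<in>B. s (f z) w \<and> s w (f x) \<and> hdg B s d w} \<subseteq> f ` {w\<in>A. r z w \<and> r w x \<and> hdg A r d w}"
    proof
      fix w assume "w \<in> {w\<in>B. s (f z) w \<and> s w (f x) \<and> hdg B s d w}"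
      then obtain u where "u \<in> A" "w = f u" "s (f z) (f u)" "s (f u) (f x)" "hdg B s d (f u)"
        using img by auto
      then show "w \<in> f ` {w\<in>A. r z w \<and> r w x \<and> hdg A r d w}"
        using Suc.IH[of u] ord Suc.prems that by auto
    qed
  next
    show "f ` {w\<in>A. r z w \<and> r w x \<and> hdg A r d w} \<subseteq> {w\<in>B. s (f z) w \<and> s w (f x) \<and> hdg B s d w}"
      using Suc.IH ord Suc.prems that img by auto
  qed
  have fin: "finite (f ` {w\<in>A. r z w \<and> r w x \<and> hdg A r d w}) \<longleftrightarrow> finite {w\<in>A. r z w \<and> r w x \<and> hdg A r d w}" for z
    by (rule finite_image_iff) (rule inj_on_subset[OF inj], auto)
  show ?case
  proof
    assume H: "hdg A r (Suc d) x"
    show "hdg B s (Suc d) (f x)"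
      unfolding hdg.simps(2)
    proof (intro ballI impI)
      fix z' assume "z' \<in> B" "s z' (f x)"
      then obtain z where "z \<in> A" "z' = f z" using img by auto
      then show "infinite {w\<in>B. s z' w \<and> s w (f x) \<and> hdg B s d w}"
        using H eq fin ord Suc.prems \<open>s z' (f x)\<close> unfolding hdg.simps(2) by auto
    qed
  next
    assume H: "hdg B s (Suc d) (f x)"
    show "hdg A r (Suc d) x"
      unfolding hdg.simps(2)
    proof (intro ballI impI)
      fix z assume "z \<in> A" "r z x"
      then have "infinite {w\<in>B. s (f z) w \<and> s w (f x) \<and> hdg B s d w}"
        using H ord Suc.prems img unfolding hdg.simps(2) by auto
      then show "infinite {w\<in>A. r z w \<and> r w x \<and> hdg A r d w}"
        using eq[OF \<open>z \<in> A\<close>] fin by auto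
    qed
  qed
qed

definition Cset :: "'a set \<Rightarrow> ('a \<Rightarrow> 'a \<Rightarrow> bool) \<Rightarrow> nat \<Rightarrow> 'a \<Rightarrow> 'a set" where
  "Cset A r D y = {z\<in>A. r z y \<and> hdg A r D z \<and> (\<forall>w\<in>A. r z w \<and> r w y \<longrightarrow> \<not> hdg A r (Suc D) w)}"

lemma Cset_iso:
  assumes bij: "bij_betw f A B" and ord: "\<forall>x\<in>A. \<forall>y\<in>A. r x y \<longleftrightarrow> s (f x) (f y)"
    and y: "y \<in> A"
  shows "card (Cset A r D y) = card (Cset B s D (f y))"
proof -
  have inj: "inj_on f A" and img: "f ` A = B" using bij by (auto simp: bij_betw_def)
  note H = hd_iso[OF bij ord]
  have "Cset B s D (f y) = f ` Cset A r D y"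
  proof
    show "f ` Cset A r D y \<subseteq> Cset B s D (f y)"
    proof
      fix w' assume "w' \<in> f ` Cset A r D y"
      then obtain z where z: "z \<in> Cset A r D y" "w' = f z" by auto
      have "\<forall>w\<in>B. s (f z) w \<and> s w (f y) \<longrightarrow> \<not> hdg B s (Suc D) w"
      proof (intro ballI impI)
        fix w assume "w \<in> B" "s (f z) w \<and> s w (f y)"
        then obtain u where "u \<in> A" "w = f u" using img by auto
        then show "\<not> hdg B s (Suc D) w" using z \<open>s (f z) w \<and> s w (f y)\<close> H ord y
          unfolding Cset_def by auto
      qed
      then show "w' \<in> Cset B s D (f y)" using z H ord y img unfolding Cset_def by auto
    qed
  next
    show "Cset B s D (f y) \<subseteq> f ` Cset A r D y"
    proof
      fix w' assume w': "w' \<in> Cset B s D (f y)"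
      then obtain z where z: "z \<in> A" "w' = f z" using img unfolding Cset_def by auto
      have "z \<in> Cset A r D y" using w' z H ord y img unfolding Cset_def by auto
      then show "w' \<in> f ` Cset A r D y" using z by auto
    qed
  qed
  moreover have "inj_on f (Cset A r D y)" by (rule inj_on_subset[OF inj]) (auto simp: Cset_def)
  ultimately show ?thesis by (simp add: card_image)
qed


lemma inl_mem [simp]: "Inl (k, c, xs) \<in> Lcarrier i \<longleftrightarrow> 1 \<le> k \<and> c < nat (- i) + k \<and> length xs = nat i + k"
  by (auto simp: Lcarrier_def)
lemma inr_mem [simp]: "Inr (m, xs) \<in> Lcarrier i \<longleftrightarrow> length xs = m"
  by (auto simp: Lcarrier_def)

lemma Lless_total:
  assumes "x \<in> Lcarrier i" "y \<in> Lcarrier i" "x \<noteq> y" shows "Lless x y \<or> Lless y x"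
proof (cases x)
  case (Inl a)
  then obtain k c xs where x: "x = Inl (k, c, xs)" by (cases a) auto
  show ?thesis
  proof (cases y)
    case (Inl b)
    then obtain k' c' xs' where y: "y = Inl (k', c', xs')" by (cases b) auto
    show ?thesis using assms x y lexless_total[of xs xs'] by auto
  next
    case (Inr b) then show ?thesis using x by (cases b) auto
  qed
next
  case (Inr a)
  then obtain m xs where x: "x = Inr (m, xs)" by (cases a) auto
  show ?thesis
  proof (cases y)
    case (Inl b)
    then show ?thesis using x by (cases b) auto
  next
    case (Inr b)
    then obtain m' xs' where y: "y = Inr (m', xs')" by (cases b) auto
    show ?thesis using assms x y lexless_total[of xs xs'] by auto
  qed
qed

fun gmap :: "nat \<Rightarrow> Lpt \<Rightarrow> nat \<times> nat \<times> nat \<times> nat list" where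
  "gmap K (Inl (k, c, xs)) = (0, K - k, c, xs)"
| "gmap K (Inr (m, xs)) = (1, m, 0, xs)"

fun kof :: "Lpt \<Rightarrow> nat" where
  "kof (Inl (k, _)) = k"
| "kof (Inr _) = 0"

definition RR :: "((nat \<times> nat \<times> nat \<times> nat list) \<times> (nat \<times> nat \<times> nat \<times> nat list)) set" where
  "RR = less_than <*lex*> less_than <*lex*> less_than <*lex*> lex less_than"

lemma wf_RR: "wf RR" unfolding RR_def by auto

lemma gmap_RR:
  assumes "w \<in> Lcarrier i" "z \<in> Lcarrier i" "Lless x w" "Lless w z"
  shows "(gmap (kof x) w, gmap (kof x) z) \<in> RR"
proof -
  obtain kx where kx: "kof x = kx" by simp
  have bnd: "k \<le> kx" if "Lless x (Inl (k, c, xs))" for k c xs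
    using that kx by (cases x) (auto split: prod.splits)
  show ?thesis
  proof (cases w)
    case (Inl a)
    then obtain k c xs where w: "w = Inl (k, c, xs)" by (cases a) auto
    show ?thesis
    proof (cases z)
      case (Inl b)
      then obtain k' c' xs' where z: "z = Inl (k', c', xs')" by (cases b) auto
      have "k \<le> kx" "k' \<le> kx" using bnd assms w z
        by (auto intro: bnd[of k c xs]) (metis Lless.simps(1) bnd le_trans less_or_eq_imp_le)
      then show ?thesis using assms w z kx lexless_lex[of xs xs'] unfolding RR_def by auto
    next
      case (Inr b)
      then show ?thesis using w kx unfolding RR_def by (cases b) auto
    qed
  next
    case (Inr a)
    then obtain m xs where w: "w = Inr (m, xs)" by (cases a) auto
    show ?thesis
    proof (cases z)
      case (Inl b)
      then show ?thesis using w assms by (cases b) auto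
    next
      case (Inr b)
      then obtain m' xs' where z: "z = Inr (m', xs')" by (cases b) auto
      show ?thesis using assms w z kx lexless_lex[of xs xs'] unfolding RR_def by auto
    qed
  qed
qed

lemma scat: "scattered (Lcarrier i) Lless"
  unfolding scattered_def
proof
  assume "\<exists>S\<subseteq>Lcarrier i. dense_suborder S Lless"
  then obtain S where S: "S \<subseteq> Lcarrier i" "infinite S"
    and dn: "\<forall>x\<in>S. \<forall>y\<in>S. Lless x y \<longrightarrow> (\<exists>z\<in>S. Lless x z \<and> Lless z y)"
    unfolding dense_suborder_def by auto
  obtain x where x: "x \<in> S" using S(2) by (metis finite.emptyI ex_in_conv)
  have "infinite (S - {x})" using S(2) by auto
  then obtain y where y: "y \<in> S" "y \<noteq> x" by (metis Diff_iff ex_in_conv finite.emptyI singletonI)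
  obtain a b where ab: "a \<in> S" "b \<in> S" "Lless a b"
    using Lless_total[of x i y] x y S(1) by blast
  define T where "T = {z\<in>S. Lless a z}"
  have "b \<in> T" using ab unfolding T_def by auto
  obtain z where z: "z \<in> T" and zmin: "\<And>w. (w, z) \<in> inv_image RR (gmap (kof a)) \<Longrightarrow> w \<notin> T"
    using wfE_min[OF wf_inv_image[OF wf_RR] \<open>b \<in> T\<close>] by blast
  then obtain w where w: "w \<in> S" "Lless a w" "Lless w z" using dn ab unfolding T_def by blast
  have "(gmap (kof a) w, gmap (kof a) z) \<in> RR"
    using gmap_RR[of w i z a] w z S(1) unfolding T_def by auto
  then show False using zmin[of w] w unfolding T_def by auto
qed


definition allz :: "nat list \<Rightarrow> bool" where "allz xs \<longleftrightarrow> (\<forall>x\<in>set xs. x = 0)"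

fun Bd :: "int \<Rightarrow> Lpt \<Rightarrow> nat" where
  "Bd i (Inl (k, c, xs)) = (if allz xs then (if c = 0 then length xs + 1 else length xs) else tz xs)"
| "Bd i (Inr (m, xs)) = (if allz xs then (if m = 0 then nat i + 1 else m - 1) else tz xs)"

lemma allz_rep [simp]: "allz (replicate n 0)" by (simp add: allz_def)
lemma nallz_app [simp]: "v \<noteq> 0 \<Longrightarrow> \<not> allz (pre @ v # U)" by (simp add: allz_def)
lemma lexless_nallz: "lexless xs ys \<Longrightarrow> \<not> allz ys" using lexless_nz by (auto simp: allz_def)
lemma tz_less': "\<not> allz ys \<Longrightarrow> tz ys < length ys" using tz_less by (auto simp: allz_def)
lemma allz_eq: "allz xs \<Longrightarrow> xs = replicate (length xs) 0"
  by (simp add: allz_def replicate_length_same)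
lemma allz_Cons [simp]: "allz (x # xs) \<longleftrightarrow> x = 0 \<and> allz xs" by (simp add: allz_def)
lemma allz_Nil [simp]: "allz []" by (simp add: allz_def)
lemma not_lexless_allz [simp]: "allz xs \<Longrightarrow> \<not> lexless ys xs" using lexless_nallz by blast

lemma between_Inl:
  "Lless (Inl (k, c, zs)) w \<Longrightarrow> Lless w (Inl (k, c, xs)) \<Longrightarrow>
   \<exists>ys. w = Inl (k, c, ys) \<and> lexless zs ys \<and> lexless ys xs"
  by (cases w) auto

lemma between_Inr:
  "Lless (Inr (m, zs)) w \<Longrightarrow> Lless w (Inr (m, xs)) \<Longrightarrow>
   \<exists>ys. w = Inr (m, ys) \<and> lexless zs ys \<and> lexless ys xs"
  by (cases w) auto

lemma sandwich_tz:
  assumes "lexless (pre @ a # replicate t 0) ys" "lexless ys (pre @ Suc a # replicate t 0)"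
    "length ys = Suc (length pre + t)"
  shows "\<not> allz ys \<and> tz ys < t"
proof -
  obtain Y where Y: "ys = pre @ a # Y" "lexless (replicate t 0) Y"
    using lexless_sandwich[OF assms(1,2)] by blast
  have nz: "\<not> allz Y" using Y(2) lexless_nallz by blast
  have len: "length Y = t" using Y(1) assms(3) by simp
  have "tz ys = tz Y" using Y(1) tz_app2[of Y pre a] nz by (auto simp: allz_def)
  then show ?thesis using nz len tz_less'[of Y] Y(1) by (auto simp: allz_def)
qed

lemma Bd_interior: "v \<noteq> 0 \<Longrightarrow> Bd i (Inl (k, c, pre @ v # replicate t 0)) = t"
  "v \<noteq> 0 \<Longrightarrow> Bd i (Inr (m, pre @ v # replicate t 0)) = t"
  by (auto simp: tz_app)

definition Kup :: "int \<Rightarrow> Lpt \<Rightarrow> bool" where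
  "Kup i x \<longleftrightarrow> (\<exists>z\<in>Lcarrier i. Lless z x \<and> (\<forall>w\<in>Lcarrier i. Lless z w \<and> Lless w x \<longrightarrow> Bd i w < Bd i x))"

lemma Kup_A:
  assumes "Inl (k, c, pre @ Suc a # replicate t 0) \<in> Lcarrier i"
  shows "Kup i (Inl (k, c, pre @ Suc a # replicate t 0))"
  unfolding Kup_def
proof (intro bexI conjI ballI impI)
  let ?z = "Inl (k, c, pre @ a # replicate t 0) :: Lpt"
  show "?z \<in> Lcarrier i" using assms by simp
  show "Lless ?z (Inl (k, c, pre @ Suc a # replicate t 0))" by (simp add: lexless_app)
  fix w assume w: "w \<in> Lcarrier i" "Lless ?z w \<and> Lless w (Inl (k, c, pre @ Suc a # replicate t 0))"
  then obtain ys where ys: "w = Inl (k, c, ys)" "lexless (pre @ a # replicate t 0) ys"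
    "lexless ys (pre @ Suc a # replicate t 0)" using between_Inl by blast
  have "length ys = Suc (length pre + t)" using w(1) ys(1) assms by simp
  then have "\<not> allz ys \<and> tz ys < t" using sandwich_tz ys(2,3) by blast
  then show "Bd i w < Bd i (Inl (k, c, pre @ Suc a # replicate t 0))"
    using ys(1) Bd_interior(1)[of "Suc a" i k c pre t] by simp
qed

lemma Kup_D:
  assumes "Inr (m, pre @ Suc a # replicate t 0) \<in> Lcarrier i"
  shows "Kup i (Inr (m, pre @ Suc a # replicate t 0))"
  unfolding Kup_def
proof (intro bexI conjI ballI impI)
  let ?z = "Inr (m, pre @ a # replicate t 0) :: Lpt"
  show "?z \<in> Lcarrier i" using assms by simp
  show "Lless ?z (Inr (m, pre @ Suc a # replicate t 0))" by (simp add: lexless_app)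
  fix w assume w: "w \<in> Lcarrier i" "Lless ?z w \<and> Lless w (Inr (m, pre @ Suc a # replicate t 0))"
  then obtain ys where ys: "w = Inr (m, ys)" "lexless (pre @ a # replicate t 0) ys"
    "lexless ys (pre @ Suc a # replicate t 0)" using between_Inr by blast
  have "length ys = Suc (length pre + t)" using w(1) ys(1) assms by simp
  then have "\<not> allz ys \<and> tz ys < t" using sandwich_tz ys(2,3) by blast
  then show "Bd i w < Bd i (Inr (m, pre @ Suc a # replicate t 0))"
    using ys(1) Bd_interior(2)[of "Suc a" i m pre t] by simp
qed

lemma Kup_B:
  assumes "Inl (k, Suc c, replicate n 0) \<in> Lcarrier i"
  shows "Kup i (Inl (k, Suc c, replicate n 0))"
  unfolding Kup_def
proof (intro bexI conjI ballI impI)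
  let ?z = "Inl (k, c, replicate n 0) :: Lpt"
  show "?z \<in> Lcarrier i" using assms by simp
  show "Lless ?z (Inl (k, Suc c, replicate n 0))" by simp
  fix w assume w: "w \<in> Lcarrier i" "Lless ?z w \<and> Lless w (Inl (k, Suc c, replicate n 0))"
  then obtain ys where ys: "w = Inl (k, c, ys)" "lexless (replicate n 0) ys"
    using assms by (cases w) auto
  have "length ys = n" using w(1) ys(1) assms by simp
  then show "Bd i w < Bd i (Inl (k, Suc c, replicate n 0))"
    using ys lexless_nallz tz_less' by fastforce
qed

lemma Kup_C:
  assumes "Inl (k, 0, replicate n 0) \<in> Lcarrier i"
  shows "Kup i (Inl (k, 0, replicate n 0))"
  unfolding Kup_def
proof (intro bexI conjI ballI impI)
  let ?z = "Inl (Suc k, nat (-i) + k, replicate (Suc n) 0) :: Lpt"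
  show "?z \<in> Lcarrier i" using assms by simp
  show "Lless ?z (Inl (k, 0, replicate n 0))" by simp
  fix w assume w: "w \<in> Lcarrier i" "Lless ?z w \<and> Lless w (Inl (k, 0, replicate n 0))"
  then obtain ys where ys: "w = Inl (Suc k, nat (-i) + k, ys)" "lexless (replicate (Suc n) 0) ys"
    using assms by (cases w) auto
  have "length ys = Suc n" using w(1) ys(1) assms by simp
  then show "Bd i w < Bd i (Inl (k, 0, replicate n 0))"
    using ys lexless_nallz tz_less' by fastforce
qed

lemma Kup_E:
  assumes "Inr (Suc m, replicate (Suc m) 0) \<in> Lcarrier i"
  shows "Kup i (Inr (Suc m, replicate (Suc m) 0))"
  unfolding Kup_def
proof (intro bexI conjI ballI impI)
  let ?z = "Inr (m, replicate m 0) :: Lpt"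
  show "?z \<in> Lcarrier i" by simp
  show "Lless ?z (Inr (Suc m, replicate (Suc m) 0))" by simp
  fix w assume w: "w \<in> Lcarrier i" "Lless ?z w \<and> Lless w (Inr (Suc m, replicate (Suc m) 0))"
  then obtain ys where ys: "w = Inr (m, ys)" "lexless (replicate m 0) ys"
    by (cases w) auto
  have "length ys = m" using w(1) ys(1) by simp
  then show "Bd i w < Bd i (Inr (Suc m, replicate (Suc m) 0))"
    using ys lexless_nallz tz_less' by fastforce
qed

lemma Kup_F: "Kup i (Inr (0, []))"
  unfolding Kup_def
proof (intro bexI conjI ballI impI)
  let ?z = "Inl (1, nat (-i), replicate (nat i + 1) 0) :: Lpt"
  show "?z \<in> Lcarrier i" by simp
  show "Lless ?z (Inr (0, []))" by simp
  fix w assume w: "w \<in> Lcarrier i" "Lless ?z w \<and> Lless w (Inr (0, []))"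
  then obtain ys where ys: "w = Inl (1, nat (-i), ys)" "lexless (replicate (nat i + 1) 0) ys"
    by (cases w) auto
  have "length ys = nat i + 1" using w(1) ys(1) by simp
  then show "Bd i w < Bd i (Inr (0, []))"
    using ys lexless_nallz tz_less' by fastforce
qed

lemma cases_pt:
  assumes "x \<in> Lcarrier i"
  obtains (A) k c pre a t where "x = Inl (k, c, pre @ Suc a # replicate t 0)"
  | (B) k c n where "x = Inl (k, Suc c, replicate n 0)"
  | (C) k n where "x = Inl (k, 0, replicate n 0)"
  | (D) m pre a t where "x = Inr (m, pre @ Suc a # replicate t 0)"
  | (E) m where "x = Inr (Suc m, replicate (Suc m) 0)"
  | (F) "x = Inr (0, [])"
proof (cases x)
  case (Inl p)
  then obtain k c xs where x: "x = Inl (k, c, xs)" by (cases p) auto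
  show ?thesis
  proof (cases "allz xs")
    case True
    then have xs: "xs = replicate (length xs) 0" by (rule allz_eq)
    show ?thesis
    proof (cases c)
      case 0 then show ?thesis using C x xs by metis
    next
      case (Suc c') then show ?thesis using B x xs by metis
    qed
  next
    case False
    then obtain pre v t where "xs = pre @ v # replicate t 0" "v \<noteq> 0"
      using decomp[of xs] by (auto simp: allz_def)
    then show ?thesis using A x by (metis not0_implies_Suc)
  qed
next
  case (Inr p)
  then obtain m xs where x: "x = Inr (m, xs)" by (cases p) auto
  have len: "length xs = m" using assms x by simp
  show ?thesis
  proof (cases "allz xs")
    case True
    then have xs: "xs = replicate m 0" using allz_eq len by metis
    show ?thesis
    proof (cases m)
      case 0 then show ?thesis using F x xs by simp
    next
      case (Suc m') then show ?thesis using E x xs by metis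
    qed
  next
    case False
    then obtain pre v t where "xs = pre @ v # replicate t 0" "v \<noteq> 0"
      using decomp[of xs] by (auto simp: allz_def)
    then show ?thesis using D x by (metis not0_implies_Suc)
  qed
qed

lemma Kup_all: assumes that: "x \<in> Lcarrier i" shows "Kup i x"
  using that
proof (cases rule: cases_pt)
  case A then show ?thesis using Kup_A that by metis
next
  case B then show ?thesis using Kup_B that by metis
next
  case C then show ?thesis using Kup_C that by metis
next
  case D then show ?thesis using Kup_D that by metis
next
  case E then show ?thesis using Kup_E that by metis
next
  case F then show ?thesis using Kup_F by metis
qed

lemma hd_upper: "x \<in> Lcarrier i \<Longrightarrow> hdg (Lcarrier i) Lless d x \<Longrightarrow> d \<le> Bd i x"
proof (induction d arbitrary: x)
  case 0 then show ?case by simp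
next
  case (Suc d)
  obtain z where z: "z \<in> Lcarrier i" "Lless z x"
    and zb: "\<forall>w\<in>Lcarrier i. Lless z w \<and> Lless w x \<longrightarrow> Bd i w < Bd i x"
    using Kup_all[OF Suc.prems(1)] unfolding Kup_def by blast
  have "infinite {w\<in>Lcarrier i. Lless z w \<and> Lless w x \<and> hdg (Lcarrier i) Lless d w}"
    using Suc.prems z unfolding hdg.simps(2) by blast
  then obtain w where "w \<in> Lcarrier i" "Lless z w" "Lless w x" "hdg (Lcarrier i) Lless d w"
    by (metis (no_types, lifting) empty_Collect_eq finite.emptyI)
  then show ?case using Suc.IH zb by fastforce
qed


definition Klow :: "int \<Rightarrow> Lpt \<Rightarrow> bool" where
  "Klow i x \<longleftrightarrow> (\<exists>y::nat \<Rightarrow> Lpt. inj y \<and> (\<forall>n. y n \<in> Lcarrier i \<and> Lless (y n) x \<and> Bd i x \<le> Suc (Bd i (y n)))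
     \<and> (\<forall>z\<in>Lcarrier i. Lless z x \<longrightarrow> (\<exists>N. \<forall>n\<ge>N. Lless z (y n))))"

lemma Bd_int2: "Bd i (Inl (k, c, pre @ a # Suc n # replicate t 0)) = t"
  "Bd i (Inr (m, pre @ a # Suc n # replicate t 0)) = t"
  "Bd i (Inl (k, c, Suc n # replicate t 0)) = t"
  "Bd i (Inr (m, Suc n # replicate t 0)) = t"
  using Bd_interior(1)[of "Suc n" i k c "pre @ [a]" t] Bd_interior(2)[of "Suc n" i m "pre @ [a]" t]
    Bd_interior(1)[of "Suc n" i k c "[]" t] Bd_interior(2)[of "Suc n" i m "[]" t] by simp_all

lemma approx2:
  assumes "lexless zs (pre @ Suc a # replicate (Suc t) 0)" "length zs = Suc (length pre + Suc t)"
  shows "\<exists>N. \<forall>n\<ge>N. lexless zs (pre @ a # Suc n # replicate t 0)"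
proof -
  obtain N where N: "\<forall>n\<ge>N. lexless zs (pre @ a # n # replicate t 0)"
    using lexless_approx[OF assms(1), of "replicate t 0"] assms(2) by fastforce
  then show ?thesis by (intro exI[of _ N]) auto
qed

lemma Klow_A:
  assumes "Inl (k, c, pre @ Suc a # replicate (Suc t) 0) \<in> Lcarrier i"
  shows "Klow i (Inl (k, c, pre @ Suc a # replicate (Suc t) 0))"
  unfolding Klow_def
proof (intro exI[of _ "\<lambda>n. Inl (k, c, pre @ a # Suc n # replicate t 0)"] conjI allI ballI impI)
  show "inj (\<lambda>n. Inl (k, c, pre @ a # Suc n # replicate t 0) :: Lpt)" by (auto simp: inj_def)
  fix n
  show "Inl (k, c, pre @ a # Suc n # replicate t 0) \<in> Lcarrier i" using assms by simp
  show "Lless (Inl (k, c, pre @ a # Suc n # replicate t 0)) (Inl (k, c, pre @ Suc a # replicate (Suc t) 0))"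
    by (simp add: lexless_app)
  show "Bd i (Inl (k, c, pre @ Suc a # replicate (Suc t) 0)) \<le> Suc (Bd i (Inl (k, c, pre @ a # Suc n # replicate t 0)))"
    using Bd_int2(1) Bd_interior(1)[of "Suc a" i k c pre "Suc t"] by simp
next
  fix z assume z: "z \<in> Lcarrier i" "Lless z (Inl (k, c, pre @ Suc a # replicate (Suc t) 0))"
  show "\<exists>N. \<forall>n\<ge>N. Lless z (Inl (k, c, pre @ a # Suc n # replicate t 0))"
  proof (cases z)
    case (Inl p)
    then obtain k' c' zs where zz: "z = Inl (k', c', zs)" by (cases p) auto
    show ?thesis
    proof (cases "k' = k \<and> c' = c")
      case True
      then have "lexless zs (pre @ Suc a # replicate (Suc t) 0)" "length zs = Suc (length pre + Suc t)"
        using z zz assms by auto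
      then show ?thesis using approx2 zz True by fastforce
    next
      case False then show ?thesis using z zz by auto
    qed
  next
    case (Inr p) then show ?thesis using z by (cases p) auto
  qed
qed

lemma Klow_D:
  assumes "Inr (m, pre @ Suc a # replicate (Suc t) 0) \<in> Lcarrier i"
  shows "Klow i (Inr (m, pre @ Suc a # replicate (Suc t) 0))"
  unfolding Klow_def
proof (intro exI[of _ "\<lambda>n. Inr (m, pre @ a # Suc n # replicate t 0)"] conjI allI ballI impI)
  show "inj (\<lambda>n. Inr (m, pre @ a # Suc n # replicate t 0) :: Lpt)" by (auto simp: inj_def)
  fix n
  show "Inr (m, pre @ a # Suc n # replicate t 0) \<in> Lcarrier i" using assms by simp
  show "Lless (Inr (m, pre @ a # Suc n # replicate t 0)) (Inr (m, pre @ Suc a # replicate (Suc t) 0))"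
    by (simp add: lexless_app)
  show "Bd i (Inr (m, pre @ Suc a # replicate (Suc t) 0)) \<le> Suc (Bd i (Inr (m, pre @ a # Suc n # replicate t 0)))"
    using Bd_int2(2) Bd_interior(2)[of "Suc a" i m pre "Suc t"] by simp
next
  fix z assume z: "z \<in> Lcarrier i" "Lless z (Inr (m, pre @ Suc a # replicate (Suc t) 0))"
  show "\<exists>N. \<forall>n\<ge>N. Lless z (Inr (m, pre @ a # Suc n # replicate t 0))"
  proof (cases z)
    case (Inr p)
    then obtain m' zs where zz: "z = Inr (m', zs)" by (cases p) auto
    show ?thesis
    proof (cases "m' = m")
      case True
      then have "lexless zs (pre @ Suc a # replicate (Suc t) 0)" "length zs = Suc (length pre + Suc t)"
        using z zz assms by auto
      then show ?thesis using approx2 zz True by fastforce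
    next
      case False then show ?thesis using z zz by auto
    qed
  next
    case (Inl p) then show ?thesis using z by (cases p) auto
  qed
qed

lemma Klow_B:
  assumes "Inl (k, Suc c, replicate (Suc e) 0) \<in> Lcarrier i"
  shows "Klow i (Inl (k, Suc c, replicate (Suc e) 0))"
  unfolding Klow_def
proof (intro exI[of _ "\<lambda>n. Inl (k, c, Suc n # replicate e 0)"] conjI allI ballI impI)
  show "inj (\<lambda>n. Inl (k, c, Suc n # replicate e 0) :: Lpt)" by (auto simp: inj_def)
  fix n
  show "Inl (k, c, Suc n # replicate e 0) \<in> Lcarrier i" using assms by simp
  show "Lless (Inl (k, c, Suc n # replicate e 0)) (Inl (k, Suc c, replicate (Suc e) 0))" by simp
  show "Bd i (Inl (k, Suc c, replicate (Suc e) 0)) \<le> Suc (Bd i (Inl (k, c, Suc n # replicate e 0)))"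
    using Bd_int2(3)[of i k c n e] by (simp del: replicate_Suc)
next
  fix z assume z: "z \<in> Lcarrier i" "Lless z (Inl (k, Suc c, replicate (Suc e) 0))"
  show "\<exists>N. \<forall>n\<ge>N. Lless z (Inl (k, c, Suc n # replicate e 0))"
  proof (cases z)
    case (Inl p)
    then obtain k' c' zs where zz: "z = Inl (k', c', zs)" by (cases p) auto
    show ?thesis
    proof (cases "k' = k \<and> c' = c")
      case True
      then have "length zs = Suc e" using z zz assms by auto
      then obtain b R where "zs = b # R" by (cases zs) auto
      then show ?thesis using zz True by (intro exI[of _ b]) auto
    next
      case False then show ?thesis using z zz by auto
    qed
  next
    case (Inr p) then show ?thesis using z by (cases p) auto
  qed
qed

lemma Klow_C:
  assumes "Inl (k, 0, replicate n0 0) \<in> Lcarrier i"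
  shows "Klow i (Inl (k, 0, replicate n0 0))"
  unfolding Klow_def
proof (intro exI[of _ "\<lambda>n. Inl (Suc k, nat (-i) + k, Suc n # replicate n0 0)"] conjI allI ballI impI)
  show "inj (\<lambda>n. Inl (Suc k, nat (-i) + k, Suc n # replicate n0 0) :: Lpt)" by (auto simp: inj_def)
  fix n
  show "Inl (Suc k, nat (-i) + k, Suc n # replicate n0 0) \<in> Lcarrier i" using assms by simp
  show "Lless (Inl (Suc k, nat (-i) + k, Suc n # replicate n0 0)) (Inl (k, 0, replicate n0 0))" by simp
  show "Bd i (Inl (k, 0, replicate n0 0)) \<le> Suc (Bd i (Inl (Suc k, nat (-i) + k, Suc n # replicate n0 0)))"
    using Bd_int2(3)[of i "Suc k" "nat (-i) + k" n n0] by simp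
next
  fix z assume z: "z \<in> Lcarrier i" "Lless z (Inl (k, 0, replicate n0 0))"
  show "\<exists>N. \<forall>n\<ge>N. Lless z (Inl (Suc k, nat (-i) + k, Suc n # replicate n0 0))"
  proof (cases z)
    case (Inl p)
    then obtain k' c' zs where zz: "z = Inl (k', c', zs)" by (cases p) auto
    have "k < k'" using z zz by auto
    show ?thesis
    proof (cases "k' = Suc k \<and> c' = nat (-i) + k")
      case True
      then have "length zs = Suc n0" using z zz assms by auto
      then obtain b R where "zs = b # R" by (cases zs) auto
      then show ?thesis using zz True by (intro exI[of _ b]) auto
    next
      case False then show ?thesis using z zz \<open>k < k'\<close> by auto
    qed
  next
    case (Inr p) then show ?thesis using z by (cases p) auto
  qed
qed

lemma Klow_E:
  shows "Klow i (Inr (Suc (Suc m), replicate (Suc (Suc m)) 0))"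
  unfolding Klow_def
proof (intro exI[of _ "\<lambda>n. Inr (Suc m, Suc n # replicate m 0)"] conjI allI ballI impI)
  show "inj (\<lambda>n. Inr (Suc m, Suc n # replicate m 0) :: Lpt)" by (auto simp: inj_def)
  fix n
  show "Inr (Suc m, Suc n # replicate m 0) \<in> Lcarrier i" by simp
  show "Lless (Inr (Suc m, Suc n # replicate m 0)) (Inr (Suc (Suc m), replicate (Suc (Suc m)) 0))" by simp
  show "Bd i (Inr (Suc (Suc m), replicate (Suc (Suc m)) 0)) \<le> Suc (Bd i (Inr (Suc m, Suc n # replicate m 0)))"
    using Bd_int2(4)[of i "Suc m" n m] by (simp del: replicate_Suc)
next
  fix z assume z: "z \<in> Lcarrier i" "Lless z (Inr (Suc (Suc m), replicate (Suc (Suc m)) 0))"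
  show "\<exists>N. \<forall>n\<ge>N. Lless z (Inr (Suc m, Suc n # replicate m 0))"
  proof (cases z)
    case (Inr p)
    then obtain m' zs where zz: "z = Inr (m', zs)" by (cases p) auto
    have "m' < Suc (Suc m)" using z zz by (auto simp del: replicate_Suc)
    show ?thesis
    proof (cases "m' = Suc m")
      case True
      then have "length zs = Suc m" using z zz by auto
      then obtain b R where "zs = b # R" by (cases zs) auto
      then show ?thesis using zz True by (intro exI[of _ b]) auto
    next
      case False then show ?thesis using zz \<open>m' < Suc (Suc m)\<close> by auto
    qed
  next
    case (Inl p) then show ?thesis by (cases p) auto
  qed
qed

lemma Klow_F: "Klow i (Inr (0, []))"
  unfolding Klow_def
proof (intro exI[of _ "\<lambda>n. Inl (1, nat (-i), Suc n # replicate (nat i) 0)"] conjI allI ballI impI)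
  show "inj (\<lambda>n. Inl (1, nat (-i), Suc n # replicate (nat i) 0) :: Lpt)" by (auto simp: inj_def)
  fix n
  show "Inl (1, nat (-i), Suc n # replicate (nat i) 0) \<in> Lcarrier i" by simp
  show "Lless (Inl (1, nat (-i), Suc n # replicate (nat i) 0)) (Inr (0, []))" by simp
  show "Bd i (Inr (0, [])) \<le> Suc (Bd i (Inl (1, nat (-i), Suc n # replicate (nat i) 0)))"
    using Bd_int2(3)[of i 1 "nat (-i)" n "nat i"] by simp
next
  fix z assume z: "z \<in> Lcarrier i" "Lless z (Inr (0, []))"
  show "\<exists>N. \<forall>n\<ge>N. Lless z (Inl (1, nat (-i), Suc n # replicate (nat i) 0))"
  proof (cases z)
    case (Inl p)
    then obtain k' c' zs where zz: "z = Inl (k', c', zs)" by (cases p) auto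
    have "1 \<le> k'" using z zz by auto
    show ?thesis
    proof (cases "k' = 1 \<and> c' = nat (-i)")
      case True
      then have "length zs = Suc (nat i)" using z zz by auto
      then obtain b R where "zs = b # R" by (cases zs) auto
      then show ?thesis using zz True by (intro exI[of _ b]) auto
    next
      case False then show ?thesis using z zz \<open>1 \<le> k'\<close> by auto
    qed
  next
    case (Inr p) then show ?thesis using z by (cases p) auto
  qed
qed

lemma Klow_all: assumes that: "x \<in> Lcarrier i" and b: "1 \<le> Bd i x" shows "Klow i x"
  using that
proof (cases rule: cases_pt)
  case (A k c pre a t)
  then obtain t' where "t = Suc t'" using b Bd_interior(1)[of "Suc a" i k c pre t] by (cases t) auto
  then show ?thesis using Klow_A that A by metis
next
  case (B k c n)
  then obtain e where "n = Suc e" using b by (cases n) auto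
  then show ?thesis using Klow_B that B by metis
next
  case C then show ?thesis using Klow_C that by metis
next
  case (D m pre a t)
  then obtain t' where "t = Suc t'" using b Bd_interior(2)[of "Suc a" i m pre t] by (cases t) auto
  then show ?thesis using Klow_D that D by metis
next
  case (E m)
  then obtain m' where "m = Suc m'" using b by (cases m) (auto simp del: replicate_Suc)
  then show ?thesis using Klow_E E by metis
next
  case F then show ?thesis using Klow_F by metis
qed

lemma hd_lower: "x \<in> Lcarrier i \<Longrightarrow> d \<le> Bd i x \<Longrightarrow> hdg (Lcarrier i) Lless d x"
proof (induction d arbitrary: x)
  case 0 then show ?case by simp
next
  case (Suc d)
  have "Klow i x" using Klow_all[OF Suc.prems(1)] Suc.prems(2) by simp
  then obtain y :: "nat \<Rightarrow> Lpt" where y1: "inj y"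
    and y0: "\<forall>n. y n \<in> Lcarrier i \<and> Lless (y n) x \<and> Bd i x \<le> Suc (Bd i (y n))"
    and cof: "\<forall>z\<in>Lcarrier i. Lless z x \<longrightarrow> (\<exists>N. \<forall>n\<ge>N. Lless z (y n))"
    unfolding Klow_def by blast
  have y: "inj y" "\<And>n. y n \<in> Lcarrier i" "\<And>n. Lless (y n) x" "\<And>n. Bd i x \<le> Suc (Bd i (y n))"
    using y0 y1 by auto
  show ?case unfolding hdg.simps(2)
  proof (intro ballI impI)
    fix z assume z: "z \<in> Lcarrier i" "Lless z x"
    then obtain N where N: "\<forall>n\<ge>N. Lless z (y n)" using cof by blast
    have sub: "y ` {N..} \<subseteq> {w\<in>Lcarrier i. Lless z w \<and> Lless w x \<and> hdg (Lcarrier i) Lless d w}"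
    proof
      fix w assume "w \<in> y ` {N..}"
      then obtain n where n: "n \<ge> N" "w = y n" by auto
      have "d \<le> Bd i (y n)" using y(4)[of n] Suc.prems(2) by simp
      then show "w \<in> {w\<in>Lcarrier i. Lless z w \<and> Lless w x \<and> hdg (Lcarrier i) Lless d w}"
        using n N y Suc.IH by auto
    qed
    have "infinite (y ` {N..})"
      using y(1) finite_imageD[of y "{N..}"] infinite_Ici[of N] inj_on_subset[of y UNIV "{N..}"] by auto
    then show "infinite {w\<in>Lcarrier i. Lless z w \<and> Lless w x \<and> hdg (Lcarrier i) Lless d w}"
      using sub finite_subset by blast
  qed
qed

lemma hdg_iff: "x \<in> Lcarrier i \<Longrightarrow> hdg (Lcarrier i) Lless d x \<longleftrightarrow> d \<le> Bd i x"
  using hd_upper hd_lower by blast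


lemma Bd_Inl_le: "Inl (k, c, xs) \<in> Lcarrier i \<Longrightarrow> Bd i (Inl (k, c, xs)) \<le> nat i + k + 1"
  using tz_less'[of xs] by auto
lemma Bd_Inl_le2: "Inl (k, c, xs) \<in> Lcarrier i \<Longrightarrow> c \<noteq> 0 \<or> \<not> allz xs \<Longrightarrow> Bd i (Inl (k, c, xs)) \<le> nat i + k"
  using tz_less'[of xs] by auto
lemma Bd_Inl_lt: "Inl (k, c, xs) \<in> Lcarrier i \<Longrightarrow> \<not> allz xs \<Longrightarrow> Bd i (Inl (k, c, xs)) < nat i + k"
  using tz_less'[of xs] by auto
lemma Bd_Inr_le: "Inr (m, xs) \<in> Lcarrier i \<Longrightarrow> Bd i (Inr (m, xs)) \<le> m + nat i + 1"
  using tz_less'[of xs] by auto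

definition SS :: "int \<Rightarrow> nat \<Rightarrow> Lpt set" where
  "SS i K = (\<lambda>c. Inl (K, c, replicate (nat i + K) 0)) ` {..<nat (-i) + K}
            \<union> {Inl (K - 1, 0, replicate (nat i + (K - 1)) 0)}"

lemma card_SS: "K \<ge> 2 \<Longrightarrow> card (SS i K) = nat (-i) + K + 1"
proof -
  assume K: "K \<ge> 2"
  have inj: "inj_on (\<lambda>c. Inl (K, c, replicate (nat i + K) 0) :: Lpt) {..<nat (-i) + K}"
    by (auto simp: inj_on_def)
  have nin: "Inl (K - 1, 0, replicate (nat i + (K - 1)) 0) \<notin> (\<lambda>c. Inl (K, c, replicate (nat i + K) 0) :: Lpt) ` {..<nat (-i) + K}"
    using K by auto
  have "card (SS i K) = Suc (card ((\<lambda>c. Inl (K, c, replicate (nat i + K) 0) :: Lpt) ` {..<nat (-i) + K}))"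
    unfolding SS_def using nin by (simp add: card_insert_disjoint)
  then show ?thesis using card_image[OF inj] by simp
qed

lemma count:
  assumes K: "2 \<le> K"
    and Y1: "\<forall>k c xs. K - 1 \<le> k \<longrightarrow> Inl (k, c, xs) \<in> Lcarrier i \<longrightarrow> Lless (Inl (k, c, xs)) y"
    and Y2: "\<forall>m xs. Lless (Inr (m, xs)) y \<longrightarrow> m + 2 \<le> K"
  shows "Cset (Lcarrier i) Lless (nat i + K) y = SS i K"
proof
  show "Cset (Lcarrier i) Lless (nat i + K) y \<subseteq> SS i K"
  proof
    fix z assume "z \<in> Cset (Lcarrier i) Lless (nat i + K) y"
    then have zA: "z \<in> Lcarrier i" and zy: "Lless z y" and Bz: "nat i + K \<le> Bd i z"
      and hw: "\<forall>w\<in>Lcarrier i. Lless z w \<and> Lless w y \<longrightarrow> Bd i w \<le> nat i + K"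
      unfolding Cset_def using hdg_iff by (auto simp: not_less_eq_eq[symmetric])
    show "z \<in> SS i K"
    proof (cases z)
      case (Inr p)
      then obtain mz zs where zz: "z = Inr (mz, zs)" by (cases p) auto
      then show ?thesis using Y2 zy Bd_Inr_le[of mz zs i] zA Bz by fastforce
    next
      case (Inl p)
      then obtain kz cz zs where zz: "z = Inl (kz, cz, zs)" by (cases p) auto
      have kz1: "1 \<le> kz" "cz < nat (-i) + kz" "length zs = nat i + kz" using zA zz by auto
      consider "K < kz" | "kz = K" | "kz = K - 1" | "kz < K - 1" by linarith
      then show ?thesis
      proof cases
        case 1
        let ?w = "Inl (K, 0, replicate (nat i + K) 0) :: Lpt"
        have "?w \<in> Lcarrier i" "Lless z ?w" "Lless ?w y" using K 1 zz Y1 by auto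
        then have "Bd i ?w \<le> nat i + K" using hw by blast
        then show ?thesis by simp
      next
        case 2
        then have "allz zs" using Bd_Inl_lt[of kz cz zs i] zA zz Bz by fastforce
        then have "zs = replicate (nat i + K) 0" using allz_eq kz1 2 by metis
        then show ?thesis using zz 2 kz1 unfolding SS_def by auto
      next
        case 3
        then have "cz = 0 \<and> allz zs" using Bd_Inl_le2[of kz cz zs i] zA zz Bz K by fastforce
        then have "cz = 0" "zs = replicate (nat i + (K - 1)) 0" using allz_eq kz1 3 by metis+
        then show ?thesis using zz 3 unfolding SS_def by auto
      next
        case 4
        then show ?thesis using Bd_Inl_le[of kz cz zs i] zA zz Bz by auto
      qed
    qed
  qed
next
  show "SS i K \<subseteq> Cset (Lcarrier i) Lless (nat i + K) y"
  proof
    fix z assume zS: "z \<in> SS i K"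
    have zA: "z \<in> Lcarrier i" using zS K unfolding SS_def by auto
    have zy: "Lless z y" using zS K Y1 zA unfolding SS_def by auto
    have Bz: "nat i + K \<le> Bd i z" using zS K unfolding SS_def by auto
    have hw: "Bd i w \<le> nat i + K" if w: "w \<in> Lcarrier i" "Lless z w" "Lless w y" for w
    proof (cases w)
      case (Inr p)
      then obtain mw ws where ww: "w = Inr (mw, ws)" by (cases p) auto
      then show ?thesis using Y2 w Bd_Inr_le[of mw ws i] by fastforce
    next
      case (Inl p)
      then obtain kw cw ws where ww: "w = Inl (kw, cw, ws)" by (cases p) auto
      have le1: "Bd i w \<le> nat i + kw + 1" using Bd_Inl_le ww w by blast
      have le2: "cw \<noteq> 0 \<or> \<not> allz ws \<Longrightarrow> Bd i w \<le> nat i + kw" using Bd_Inl_le2 ww w by blast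
      show ?thesis
      proof (cases "z \<in> (\<lambda>c. Inl (K, c, replicate (nat i + K) 0)) ` {..<nat (-i) + K}")
        case True
        then obtain c where zc: "z = Inl (K, c, replicate (nat i + K) 0)" by auto
        have "kw < K \<or> (kw = K \<and> (c < cw \<or> lexless (replicate (nat i + K) 0) ws))"
          using w(2) zc ww by auto
        then show ?thesis using le1 le2 lexless_nallz by fastforce
      next
        case False
        then have zc: "z = Inl (K - 1, 0, replicate (nat i + (K - 1)) 0)" using zS unfolding SS_def by auto
        have "kw < K - 1 \<or> (kw = K - 1 \<and> (0 < cw \<or> lexless (replicate (nat i + (K - 1)) 0) ws))"
          using w(2) zc ww by auto
        then show ?thesis using le1 le2 lexless_nallz K by fastforce
      qed
    qed
    show "z \<in> Cset (Lcarrier i) Lless (nat i + K) y"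
      unfolding Cset_def using zA zy Bz hw hdg_iff by (auto simp: not_less_eq_eq[symmetric])
  qed
qed

lemma ycond:
  assumes "y \<in> Lcarrier i"
  shows "\<exists>K0. \<forall>K\<ge>K0. 2 \<le> K \<and> (\<forall>k c xs. K - 1 \<le> k \<longrightarrow> Inl (k, c, xs) \<in> Lcarrier i \<longrightarrow> Lless (Inl (k, c, xs)) y)
      \<and> (\<forall>m xs. Lless (Inr (m, xs)) y \<longrightarrow> m + 2 \<le> K)"
proof (cases y)
  case (Inl p)
  then obtain ky cy ys where yy: "y = Inl (ky, cy, ys)" by (cases p) auto
  show ?thesis using yy by (intro exI[of _ "ky + 2"]) auto
next
  case (Inr p)
  then obtain my ys where yy: "y = Inr (my, ys)" by (cases p) auto
  show ?thesis using yy by (intro exI[of _ "my + 2"]) auto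
qed

lemma card_eventually:
  assumes "y \<in> Lcarrier i"
  shows "\<exists>D0. \<forall>D\<ge>D0. int (card (Cset (Lcarrier i) Lless D y)) = int D + 1 - i"
proof -
  obtain K0 where K0: "\<forall>K\<ge>K0. 2 \<le> K \<and> (\<forall>k c xs. K - 1 \<le> k \<longrightarrow> Inl (k, c, xs) \<in> Lcarrier i \<longrightarrow> Lless (Inl (k, c, xs)) y)
      \<and> (\<forall>m xs. Lless (Inr (m, xs)) y \<longrightarrow> m + 2 \<le> K)" using ycond[OF assms] by blast
  show ?thesis
  proof (intro exI[of _ "nat i + K0"] allI impI)
    fix D assume D: "nat i + K0 \<le> D"
    define K where "K = D - nat i"
    have DK: "D = nat i + K" and "K \<ge> K0" using D unfolding K_def by auto
    then have c: "2 \<le> K" "\<forall>k c xs. K - 1 \<le> k \<longrightarrow> Inl (k, c, xs) \<in> Lcarrier i \<longrightarrow> Lless (Inl (k, c, xs)) y"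
      "\<forall>m xs. Lless (Inr (m, xs)) y \<longrightarrow> m + 2 \<le> K" using K0 by auto
    have "card (Cset (Lcarrier i) Lless D y) = nat (-i) + K + 1"
      using count[OF c] card_SS[OF c(1)] DK by simp
    then show "int (card (Cset (Lcarrier i) Lless D y)) = int D + 1 - i"
      using DK by auto
  qed
qed

theorem mainTheorem3:
  shows "(\<forall>i j :: int. i \<noteq> j \<longrightarrow> \<not> order_iso (Lcarrier i) Lless (Lcarrier j) Lless)
         \<and> (\<forall>i :: int. scattered (Lcarrier i) Lless)"
proof (intro conjI allI impI)
  fix i :: int show "scattered (Lcarrier i) Lless" by (rule scat)
next
  fix i j :: int assume ij: "i \<noteq> j"
  show "\<not> order_iso (Lcarrier i) Lless (Lcarrier j) Lless"
  proof
    assume "order_iso (Lcarrier i) Lless (Lcarrier j) Lless"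
    then obtain f where bij: "bij_betw f (Lcarrier i) (Lcarrier j)"
      and ord: "\<forall>x\<in>Lcarrier i. \<forall>y\<in>Lcarrier i. Lless x y \<longleftrightarrow> Lless (f x) (f y)"
      unfolding order_iso_def by blast
    let ?x = "Inr (0, []) :: Lpt"
    have x: "?x \<in> Lcarrier i" by simp
    have fx: "f ?x \<in> Lcarrier j" using bij x by (auto simp: bij_betw_def)
    obtain D1 where D1: "\<forall>D\<ge>D1. int (card (Cset (Lcarrier i) Lless D ?x)) = int D + 1 - i"
      using card_eventually[OF x] by blast
    obtain D2 where D2: "\<forall>D\<ge>D2. int (card (Cset (Lcarrier j) Lless D (f ?x))) = int D + 1 - j"
      using card_eventually[OF fx] by blast
    let ?D = "max D1 D2"
    have "card (Cset (Lcarrier i) Lless ?D ?x) = card (Cset (Lcarrier j) Lless ?D (f ?x))"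
      by (rule Cset_iso[OF bij ord x])
    then have "int ?D + 1 - i = int ?D + 1 - j" using D1 D2 by (metis max.cobounded1 max.cobounded2)
    then show False using ij by simp
  qed
qed

end
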